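(* Let $\mu \in \mathbb{N}$ and let $J_2 = \begin{bmatrix} 0 & 1 \\ 0 & 0 \end{bmatrix}$. Then $J_2^{(\mu)} = J_2 \oplus \cdots \oplus J_2$ ($\mu$ summands) acting on $\mathbb{C}^{2\mu}$ can be written as $MN - NM$ with $M, N \in \mathcal{B}(\mathbb{C}^{2\mu})$, $M^2 = 0 = N^2$, if and only if $\mu$ is even. *)

theory Defs
  imports Complex_Main "Jordan_Normal_Form.Matrix"
begin

definition J2 :: "complex mat" where
  "J2 = mat_of_rows_list 2 [[0, 1], [0, 0]]"

definition J2_pow :: "nat \<Rightarrow> complex mat" where
  "J2_pow mu = diag_block_mat (replicate mu J2)"

end

theory Submission
  imports Defs "Jordan_Normal_Form.Schur_Decomposition"
begin


definition trm :: "'a::comm_ring_1 mat \<Rightarrow> 'a" where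
  "trm A = (\<Sum>i<dim_row A. A $$ (i,i))"

lemma trm_mult_comm:
  fixes A B :: "'a::comm_ring_1 mat"
  assumes "A \<in> carrier_mat n m" "B \<in> carrier_mat m n"
  shows "trm (A*B) = trm (B*A)"
proof -
  have "trm (A*B) = (\<Sum>i<n. \<Sum>k<m. A $$ (i,k) * B $$ (k,i))"
    using assms unfolding trm_def
    by (auto simp: scalar_prod_def atLeast0LessThan intro!: sum.cong)
  also have "\<dots> = (\<Sum>k<m. \<Sum>i<n. B $$ (k,i) * A $$ (i,k))"
    by (subst sum.swap) (simp add: mult.commute)
  also have "\<dots> = trm (B*A)"
    using assms unfolding trm_def
    by (auto simp: scalar_prod_def atLeast0LessThan intro!: sum.cong)
  finally show ?thesis .
qed

lemma trm_add: "A \<in> carrier_mat n n \<Longrightarrow> B \<in> carrier_mat n n \<Longrightarrow> trm (A + B) = trm A + trm B"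
  unfolding trm_def by (auto simp: sum.distrib)

lemma trm_minus: "A \<in> carrier_mat n n \<Longrightarrow> B \<in> carrier_mat n n \<Longrightarrow> trm (A - B) = trm A - trm B"
  unfolding trm_def by (auto simp: sum_subtractf)

lemma trm_uminus: "A \<in> carrier_mat n n \<Longrightarrow> trm (- A) = - trm A"
  unfolding trm_def by (auto simp: sum_negf)

lemma upper_tri_sq_diag:
  fixes B :: "'a::comm_ring_1 mat"
  assumes B: "B \<in> carrier_mat n n" and ut: "upper_triangular B" and i: "i < n"
  shows "(B*B) $$ (i,i) = B $$ (i,i) * B $$ (i,i)"
proof -
  have "(B*B) $$ (i,i) = (\<Sum>k<n. B $$ (i,k) * B $$ (k,i))"
    using B i by (auto simp: scalar_prod_def atLeast0LessThan intro!: sum.cong)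
  also have "\<dots> = (\<Sum>k\<in>{i}. B $$ (i,k) * B $$ (k,i))"
  proof (rule sum.mono_neutral_right)
    show "\<forall>k\<in>{..<n} - {i}. B $$ (i, k) * B $$ (k, i) = 0"
    proof
      fix k assume k: "k \<in> {..<n} - {i}"
      show "B $$ (i, k) * B $$ (k, i) = 0"
      proof (cases "k < i")
        case True then show ?thesis using ut B i unfolding upper_triangular_def by auto
      next
        case False then have "i < k" using k by auto
        then show ?thesis using ut B k unfolding upper_triangular_def by auto
      qed
    qed
  qed (use i in auto)
  finally show ?thesis by simp
qed

lemma triangularize:
  fixes A :: "complex mat"
  assumes A: "A \<in> carrier_mat n n"
  shows "\<exists>B P Q. B \<in> carrier_mat n n \<and> upper_triangular B \<and> P \<in> carrier_mat n n \<and> Q \<in> carrier_mat n n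
     \<and> P * Q = 1\<^sub>m n \<and> Q * P = 1\<^sub>m n \<and> A = P * B * Q"
proof -
  obtain es where "char_poly A = (\<Prod> a \<leftarrow> es. [:- a, 1:])" using char_poly_factorized[OF A] by blast
  from schur_decomposition_exists[OF A this] obtain B where
    B: "B \<in> carrier_mat n n" "upper_triangular B" "similar_mat A B" by blast
  from similar_matD[OF B(3)] obtain n' P Q where
    c: "{A,B,P,Q} \<subseteq> carrier_mat n' n'" and e: "P * Q = 1\<^sub>m n'" "Q * P = 1\<^sub>m n'" "A = P * B * Q" by blast
  have "n' = n" using c A by auto
  then have "P \<in> carrier_mat n n" "Q \<in> carrier_mat n n" "P * Q = 1\<^sub>m n" "Q * P = 1\<^sub>m n"
    using c e by auto
  then show ?thesis using B e(3) by (intro exI[of _ B] exI[of _ P] exI[of _ Q]) simp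
qed

lemma trm_similar:
  fixes A :: "complex mat"
  assumes "B \<in> carrier_mat n n" "P \<in> carrier_mat n n" "Q \<in> carrier_mat n n" "Q * P = 1\<^sub>m n" "A = P * B * Q"
  shows "trm A = trm B"
proof -
  have "trm A = trm (P * (B * Q))" using assms by (simp add: assoc_mult_mat[of _ n n _ n _ n])
  also have "\<dots> = trm ((B * Q) * P)" using assms by (intro trm_mult_comm[of _ n n]) auto
  also have "\<dots> = trm B" using assms by (simp add: assoc_mult_mat[of _ n n _ n _ n])
  finally show ?thesis .
qed

lemma conj_sq:
  fixes A :: "complex mat"
  assumes "B \<in> carrier_mat n n" "P \<in> carrier_mat n n" "Q \<in> carrier_mat n n" "Q * P = 1\<^sub>m n" "A = P * B * Q"
  shows "B * B = Q * (A * A) * P" "B = Q * A * P"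
proof -
  have QP: "Q * (P * X) = X" if "X \<in> carrier_mat n n" for X
    using assms that by (simp add: assoc_mult_mat[of Q n n P n, symmetric])
  have QP2: "X * Q * P = X" if "X \<in> carrier_mat n n" for X
    using assms that by (simp add: assoc_mult_mat[of X n n Q n P n])
  have "Q * A * P = Q * (P * (B * (Q * P)))"
    using assms by (simp add: assoc_mult_mat[of _ n n _ n _ n])
  also have "\<dots> = B" using assms QP by simp
  finally show B: "B = Q * A * P" by simp
  have "Q * (A * A) * P = Q * (P * (B * (Q * (P * (B * (Q * P))))))"
    using assms by (simp add: assoc_mult_mat[of _ n n _ n _ n])
  also have "\<dots> = B * B" using assms QP by simp
  finally show "B * B = Q * (A * A) * P" by simp
qed

lemma idem_trm_nat:
  fixes A :: "complex mat"
  assumes A: "A \<in> carrier_mat n n" and idem: "A * A = A"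
  shows "\<exists>k::nat. trm A = of_nat k"
proof -
  obtain B P Q where BPQ: "B \<in> carrier_mat n n" "upper_triangular B" "P \<in> carrier_mat n n" "Q \<in> carrier_mat n n"
     "P * Q = 1\<^sub>m n" "Q * P = 1\<^sub>m n" "A = P * B * Q" using triangularize[OF A] by blast
  have BB: "B * B = B"
    using conj_sq(1)[OF BPQ(1,3,4,6,7)] conj_sq(2)[OF BPQ(1,3,4,6,7), symmetric] idem by simp
  have d: "B $$ (i,i) = 0 \<or> B $$ (i,i) = 1" if "i < n" for i
  proof -
    have "B $$ (i,i) * B $$ (i,i) = B $$ (i,i)" using upper_tri_sq_diag[OF BPQ(1,2) that] BB by simp
    then show ?thesis by (metis mult_cancel_right1 mult_eq_0_iff)
  qed
  have "trm B = (\<Sum>i<n. if B $$ (i,i) = 1 then 1 else 0)"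
    unfolding trm_def using BPQ(1)
  proof (simp, intro sum.cong refl)
    fix i assume "i \<in> {..<n}"
    then show "B $$ (i,i) = (if B $$ (i,i) = 1 then 1 else 0)" using d[of i] by auto
  qed
  also have "\<dots> = of_nat (card {i. i < n \<and> B $$ (i,i) = 1})"
    by (simp add: sum.If_cases lessThan_def Collect_conj_eq Int_commute)
  finally show ?thesis using trm_similar[OF BPQ(1,3,4,6,7)] by auto
qed

lemma nil_trm:
  fixes A :: "complex mat"
  assumes A: "A \<in> carrier_mat n n" and nil: "A * A = 0\<^sub>m n n"
  shows "trm A = 0"
proof -
  obtain B P Q where BPQ: "B \<in> carrier_mat n n" "upper_triangular B" "P \<in> carrier_mat n n" "Q \<in> carrier_mat n n"
     "P * Q = 1\<^sub>m n" "Q * P = 1\<^sub>m n" "A = P * B * Q" using triangularize[OF A] by blast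
  have BB: "B * B = 0\<^sub>m n n"
    using conj_sq(1)[OF BPQ(1,3,4,6,7)] nil BPQ(3,4) by simp
  have d: "B $$ (i,i) = 0" if "i < n" for i
  proof -
    have "B $$ (i,i) * B $$ (i,i) = 0" using upper_tri_sq_diag[OF BPQ(1,2) that] BB that by simp
    then show ?thesis by simp
  qed
  have "trm B = 0" unfolding trm_def using BPQ(1) d by auto
  then show ?thesis using trm_similar[OF BPQ(1,3,4,6,7)] by auto
qed



lemma diag_rep_carrier:
  "A \<in> carrier_mat m m \<Longrightarrow> diag_block_mat (replicate k A) \<in> carrier_mat (k*m) (k*m)"
  by (induct k) (auto simp: Let_def carrier_matD)

lemma diag_rep_Suc:
  assumes A: "A \<in> carrier_mat m m"
  shows "diag_block_mat (replicate (Suc k) A) =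
    four_block_mat A (0\<^sub>m m (k*m)) (0\<^sub>m (k*m) m) (diag_block_mat (replicate k A))"
  using diag_rep_carrier[OF A, of k] A by (simp add: Let_def carrier_matD)

lemma diag_rep_mult:
  fixes A B :: "complex mat"
  assumes A: "A \<in> carrier_mat m m" and B: "B \<in> carrier_mat m m"
  shows "diag_block_mat (replicate k A) * diag_block_mat (replicate k B) = diag_block_mat (replicate k (A*B))"
proof (induct k)
  case 0 then show ?case by (auto intro!: eq_matI)
next
  case (Suc k)
  have AB: "A * B \<in> carrier_mat m m" using A B by simp
  note cA = diag_rep_carrier[OF A, of k] and cB = diag_rep_carrier[OF B, of k]
  show ?case
    unfolding diag_rep_Suc[OF A] diag_rep_Suc[OF B] diag_rep_Suc[OF AB]
    by (subst mult_four_block_mat[of _ m m _ "k*m" _ "k*m"], insert A B cA cB Suc,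
        auto simp: left_add_zero_mat[OF diag_rep_carrier[OF AB]])
qed

lemma diag_rep_add:
  fixes A B :: "complex mat"
  assumes A: "A \<in> carrier_mat m m" and B: "B \<in> carrier_mat m m"
  shows "diag_block_mat (replicate k A) + diag_block_mat (replicate k B) = diag_block_mat (replicate k (A+B))"
proof (induct k)
  case 0 then show ?case by (auto intro!: eq_matI)
next
  case (Suc k)
  have AB: "A + B \<in> carrier_mat m m" using A B by simp
  note cA = diag_rep_carrier[OF A, of k] and cB = diag_rep_carrier[OF B, of k]
  show ?case
    unfolding diag_rep_Suc[OF A] diag_rep_Suc[OF B] diag_rep_Suc[OF AB]
    by (subst add_four_block_mat[of _ m m _ "k*m" _ "k*m"], insert A B cA cB Suc,
        auto intro!: cong_four_block_mat eq_matI)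
qed

lemma diag_rep_minus:
  fixes A B :: "complex mat"
  assumes A: "A \<in> carrier_mat m m" and B: "B \<in> carrier_mat m m"
  shows "diag_block_mat (replicate k A) - diag_block_mat (replicate k B) = diag_block_mat (replicate k (A-B))"
proof (induct k)
  case 0 then show ?case by (auto intro!: eq_matI)
next
  case (Suc k)
  have AB: "A - B \<in> carrier_mat m m" using A B by (simp add: minus_carrier_mat)
  note cA = diag_rep_carrier[OF A, of k] and cB = diag_rep_carrier[OF B, of k]
  have "four_block_mat A (0\<^sub>m m (k*m)) (0\<^sub>m (k*m) m) (diag_block_mat (replicate k A)) -
        four_block_mat B (0\<^sub>m m (k*m)) (0\<^sub>m (k*m) m) (diag_block_mat (replicate k B)) =
        four_block_mat (A - B) (0\<^sub>m m (k*m)) (0\<^sub>m (k*m) m) (diag_block_mat (replicate k A) - diag_block_mat (replicate k B))"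
    using A B cA cB by (intro eq_matI) auto
  then show ?case
    unfolding diag_rep_Suc[OF A] diag_rep_Suc[OF B] diag_rep_Suc[OF AB] Suc by simp
qed

lemma diag_rep_zero: "(diag_block_mat (replicate k (0\<^sub>m m m)) :: complex mat) = 0\<^sub>m (k*m) (k*m)"
proof (induct k)
  case 0 then show ?case by (auto intro!: eq_matI)
next
  case (Suc k)
  show ?case unfolding diag_rep_Suc[OF zero_carrier_mat] Suc
    using four_block_zero_mat[of m m "k*m" "k*m"] by simp
qed

lemma diag_rep_one: "(diag_block_mat (replicate k (1\<^sub>m m)) :: complex mat) = 1\<^sub>m (k*m)"
proof (induct k)
  case 0 then show ?case by (auto intro!: eq_matI)
next
  case (Suc k)
  show ?case unfolding diag_rep_Suc[OF one_carrier_mat] Suc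
    using four_block_one_mat[of m "k*m"] by simp
qed

lemma sum_lessThan_add_split: "(\<Sum>i<a+b. f i) = (\<Sum>i<a. f i) + (\<Sum>i<b. f (a+(i::nat)))"
  by (induct b) (auto simp: add.assoc)

lemma diag_rep_trm:
  fixes A :: "complex mat"
  assumes A: "A \<in> carrier_mat m m"
  shows "trm (diag_block_mat (replicate k A)) = of_nat k * trm A"
proof (induct k)
  case 0 then show ?case by (simp add: trm_def)
next
  case (Suc k)
  note cA = diag_rep_carrier[OF A, of k]
  have "trm (diag_block_mat (replicate (Suc k) A)) = (\<Sum>i<m + k*m. four_block_mat A (0\<^sub>m m (k*m)) (0\<^sub>m (k*m) m) (diag_block_mat (replicate k A)) $$ (i,i))"
    unfolding diag_rep_Suc[OF A] trm_def using A cA by simp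
  also have "\<dots> = trm A + trm (diag_block_mat (replicate k A))"
    unfolding sum_lessThan_add_split trm_def using A cA by simp
  finally show ?case using Suc by (simp add: algebra_simps)
qed

definition J2t :: "complex mat" where
  "J2t = mat 2 2 (\<lambda>(i,j). if i = 1 \<and> j = 0 then 1 else 0)"

lemma lt2: "(i::nat) < 2 \<longleftrightarrow> i = 0 \<or> i = 1" by auto
lemma sum2: "(\<Sum>k\<in>{0..<2::nat}. f k) = f 0 + f 1" by (simp add: numeral_2_eq_2)

lemma J2_alt: "J2 = mat 2 2 (\<lambda>(i,j). if i = 0 \<and> j = 1 then 1 else 0)"
  unfolding J2_def by (rule eq_matI) (auto simp: mat_of_rows_list_def lt2)

lemma J2_carrier: "J2 \<in> carrier_mat 2 2" unfolding J2_alt by simp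
lemma J2t_carrier: "J2t \<in> carrier_mat 2 2" unfolding J2t_def by simp

lemma J2_sq: "J2 * J2 = 0\<^sub>m 2 2"
  unfolding J2_alt by (rule eq_matI) (auto simp: scalar_prod_def sum2 lt2)

lemma J2_TLT: "J2 * J2t * J2 = J2"
  unfolding J2_alt J2t_def by (rule eq_matI) (auto simp: scalar_prod_def sum2 lt2)

lemma J2_LT: "J2t * J2 = 1\<^sub>m 2 - J2 * J2t"
  unfolding J2_alt J2t_def by (rule eq_matI) (auto simp: scalar_prod_def sum2 lt2)

lemma J2_trm: "trm (J2 * J2t) = 1"
  unfolding J2_alt J2t_def trm_def by (simp add: scalar_prod_def sum2 numeral_2_eq_2 lessThan_Suc)



lemma zero_minus_matC: "(X::complex mat) \<in> carrier_mat n n \<Longrightarrow> 0\<^sub>m n n - X = - X"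
  by (intro eq_matI) auto
lemma minus_zero_matC: "(X::complex mat) \<in> carrier_mat n n \<Longrightarrow> X - 0\<^sub>m n n = X"
  by (intro eq_matI) auto

lemma trm_swap:
  fixes Z1 Z2 T L :: "complex mat"
  assumes c: "Z1 \<in> carrier_mat n n" "Z2 \<in> carrier_mat n n" "T \<in> carrier_mat n n" "L \<in> carrier_mat n n"
  and LT: "L * T = 1\<^sub>m n - T * L" and anti: "T * Z2 = - (Z2 * T)"
  shows "trm (Z1 * (Z2 * L)) = trm (Z1 * (T * (L * (Z2 * L)))) - trm (Z2 * (T * (L * (Z1 * L))))"
proof -
  note cc = c mult_carrier_mat minus_carrier_mat add_carrier_mat
  have as: "A * B * D = A * (B * D)" if "A \<in> carrier_mat n n" "B \<in> carrier_mat n n" "D \<in> carrier_mat n n" for A B D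
    using that by (rule assoc_mult_mat)
  define W where "W = Z2 * L"
  have W: "W \<in> carrier_mat n n" unfolding W_def using c by simp
  have r3: "L * (T * W) = W - T * (L * W)"
  proof -
    have "L * (T * W) = (L * T) * W" using as c W by simp
    also have "\<dots> = 1\<^sub>m n * W - (T * L) * W" unfolding LT using c W
      by (simp add: minus_mult_distrib_mat[of _ n n _ _ n])
    also have "\<dots> = W - T * (L * W)" using as c W by simp
    finally show ?thesis .
  qed
  have WW: "W = L * (T * W) + T * (L * W)"
    unfolding r3 using c W by (intro eq_matI) auto
  have "Z1 * W = Z1 * (L * (T * W)) + Z1 * (T * (L * W))"
    by (subst WW, rule mult_add_distrib_mat[of _ n n]) (use c W in auto)
  then have e1: "trm (Z1 * W) = trm (Z1 * (L * (T * W))) + trm (Z1 * (T * (L * W)))"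
    using c W by (simp add: trm_add[of _ n])
  have "T * W = (T * Z2) * L"
    unfolding W_def using c by (simp add: as)
  also have "\<dots> = - (Z2 * T * L)" unfolding anti using c by simp
  also have "\<dots> = - (Z2 * (T * L))" using c by (simp add: as)
  finally have "T * W = - (Z2 * (T * L))" .
  then have e2: "trm (Z1 * (L * (T * W))) = - trm (Z1 * (L * (Z2 * (T * L))))"
    using c by (simp add: trm_uminus[of _ n])
  have "trm (Z1 * (L * (Z2 * (T * L)))) = trm ((Z1 * (L * Z2)) * (T * L))"
    using c by (simp add: as)
  also have "\<dots> = trm ((T * L) * (Z1 * (L * Z2)))"
    using c by (intro trm_mult_comm[of _ n n]) auto
  also have "\<dots> = trm ((T * (L * (Z1 * L))) * Z2)"
    using c by (simp add: as)
  also have "\<dots> = trm (Z2 * (T * (L * (Z1 * L))))"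
    using c by (intro trm_mult_comm[of _ n n]) auto
  finally have e3: "trm (Z1 * (L * (Z2 * (T * L)))) = trm (Z2 * (T * (L * (Z1 * L))))" .
  show ?thesis using e1 e2 e3 unfolding W_def by simp
qed

lemma nil_block:
  fixes Z T L :: "complex mat"
  assumes c: "Z \<in> carrier_mat n n" "T \<in> carrier_mat n n" "L \<in> carrier_mat n n"
  and ZZ: "Z * Z = 0\<^sub>m n n" and anti: "Z * T = - (T * Z)"
  and TLT: "T * L * T = T" and LT: "L * T = 1\<^sub>m n - T * L"
  shows "trm (Z * (T * (L * (Z * L)))) = 0"
proof -
  have as: "A * B * D = A * (B * D)" if "A \<in> carrier_mat n n" "B \<in> carrier_mat n n" "D \<in> carrier_mat n n" for A B D
    using that by (rule assoc_mult_mat)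
  have r2: "Z * (T * X) = - (T * (Z * X))" if "X \<in> carrier_mat n n" for X
  proof -
    have "Z * (T * X) = (Z * T) * X" using c that by (simp add: as)
    also have "\<dots> = - (T * (Z * X))" unfolding anti using c that by (simp add: as)
    finally show ?thesis .
  qed
  have r3: "L * (T * X) = X - T * (L * X)" if X: "X \<in> carrier_mat n n" for X
  proof -
    have "L * (T * X) = (L * T) * X" using as c X by simp
    also have "\<dots> = 1\<^sub>m n * X - (T * L) * X" unfolding LT using c X
      by (simp add: minus_mult_distrib_mat[of _ n n _ _ n])
    also have "\<dots> = X - T * (L * X)" using as c X by simp
    finally show ?thesis .
  qed
  have r4: "T * (L * (T * X)) = T * X" if X: "X \<in> carrier_mat n n" for X
  proof -
    have "T * (L * (T * X)) = (T * L * T) * X" using c X by (simp add: as)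
    also have "\<dots> = T * X" unfolding TLT ..
    finally show ?thesis .
  qed
  have r0: "Z * (Z * X) = 0\<^sub>m n n" if X: "X \<in> carrier_mat n n" for X
  proof -
    have "Z * (Z * X) = (Z * Z) * X" using c X by (simp add: as)
    also have "\<dots> = 0\<^sub>m n n" unfolding ZZ using X by (simp add: left_mult_zero_mat[of _ n])
    finally show ?thesis .
  qed
  define W where "W = L * (Z * L)"
  have W: "W \<in> carrier_mat n n" unfolding W_def using c by simp
  define V where "V = Z * (T * W)"
  have V: "V \<in> carrier_mat n n" unfolding V_def using c W by simp
  have e0: "V * V = Z * (T * (L * (Z * (L * (Z * (T * W))))))"
  proof -
    have V2: "V * V = Z * (T * (W * V))" unfolding V_def using c W by (simp add: as)
    have "W * V = L * (Z * (L * V))" unfolding W_def using c V by (simp add: as)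
    then show ?thesis unfolding V2 by (simp add: V_def)
  qed
  have e1: "Z * (L * (Z * (T * W))) = Z * (T * (L * (Z * W)))"
  proof -
    have "Z * (L * (Z * (T * W))) = - (Z * (L * (T * (Z * W))))"
      using c W by (simp add: r2)
    also have "\<dots> = - (Z * (Z * W - T * (L * (Z * W))))"
      using c W by (simp add: r3)
    also have "\<dots> = - (Z * (Z * W) - Z * (T * (L * (Z * W))))"
      using c W by (simp add: mult_minus_distrib_mat[of _ n n _ n])
    also have "\<dots> = Z * (T * (L * (Z * W)))"
      using c W by (simp add: r0 zero_minus_matC[of _ n])
    finally show ?thesis .
  qed
  have e2: "Z * (T * (L * (Z * (T * (L * (Z * W)))))) = 0\<^sub>m n n"
  proof -
    have "Z * (T * (L * (Z * (T * (L * (Z * W)))))) = - (Z * (T * (L * (T * (Z * (L * (Z * W)))))))"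
      using c W by (simp add: r2)
    also have "\<dots> = - (Z * (T * (Z * (L * (Z * W)))))"
      using c W by (simp add: r4)
    also have "\<dots> = T * (Z * (Z * (L * (Z * W))))"
      using c W by (simp add: r2)
    also have "\<dots> = 0\<^sub>m n n"
      using c W by (simp add: r0 right_mult_zero_mat[of _ n])
    finally show ?thesis .
  qed
  have sq: "V * V = 0\<^sub>m n n" unfolding e0 e1 e2 ..
  have "trm V = 0" by (rule nil_trm[OF V sq])
  then show ?thesis unfolding V_def W_def .
qed



lemma assoc_n: "A \<in> carrier_mat n n \<Longrightarrow> B \<in> carrier_mat n n \<Longrightarrow> D \<in> carrier_mat n n \<Longrightarrow>
  A * B * D = A * (B * D)"
  by (rule assoc_mult_mat)

lemma push_rule:
  fixes Z T W :: "complex mat"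
  assumes c: "Z \<in> carrier_mat n n" "T \<in> carrier_mat n n" "W \<in> carrier_mat n n"
  and anti: "Z * T = - (T * Z)"
  shows "Z * (T * W) = - (T * (Z * W))"
proof -
  have "Z * (T * W) = (Z * T) * W" using c by (simp add: assoc_n)
  also have "\<dots> = - (T * (Z * W))" unfolding anti using c by (simp add: assoc_n)
  finally show ?thesis .
qed

lemma lt_rule:
  fixes L T W :: "complex mat"
  assumes c: "L \<in> carrier_mat n n" "T \<in> carrier_mat n n" "W \<in> carrier_mat n n"
  and LT: "L * T = 1\<^sub>m n - T * L"
  shows "L * (T * W) = W - T * (L * W)"
proof -
  have "L * (T * W) = (L * T) * W" using c by (simp add: assoc_n)
  also have "\<dots> = 1\<^sub>m n * W - (T * L) * W" unfolding LT using c
    by (simp add: minus_mult_distrib_mat[of _ n n _ _ n])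
  also have "\<dots> = W - T * (L * W)" using c by (simp add: assoc_n)
  finally show ?thesis .
qed

lemma prod_rule:
  fixes A B C W :: "complex mat"
  assumes c: "A \<in> carrier_mat n n" "B \<in> carrier_mat n n" "W \<in> carrier_mat n n"
  and e: "A * B = C"
  shows "A * (B * W) = C * W"
proof -
  have "A * (B * W) = (A * B) * W" using c by (simp add: assoc_n)
  then show ?thesis unfolding e .
qed

lemma tlt_rule:
  fixes L T W :: "complex mat"
  assumes c: "L \<in> carrier_mat n n" "T \<in> carrier_mat n n" "W \<in> carrier_mat n n"
  and TLT: "T * L * T = T"
  shows "T * (L * (T * W)) = T * W"
proof -
  have "T * (L * (T * W)) = (T * L * T) * W" using c by (simp add: assoc_n)
  then show ?thesis unfolding TLT .
qed

lemma anti_left: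
  fixes Z1 Z2 :: "complex mat"
  assumes c: "Z1 \<in> carrier_mat n n" "Z2 \<in> carrier_mat n n" and ZZ: "Z1 * Z1 = 0\<^sub>m n n"
  shows "Z1 * (Z1 * Z2 - Z2 * Z1) = - ((Z1 * Z2 - Z2 * Z1) * Z1)"
proof -
  have "Z1 * (Z1 * Z2 - Z2 * Z1) = Z1 * (Z1 * Z2) - Z1 * (Z2 * Z1)"
    using c by (simp add: mult_minus_distrib_mat[of _ n n _ n])
  also have "Z1 * (Z1 * Z2) = 0\<^sub>m n n" using prod_rule[OF c(1,1,2) ZZ] c by simp
  finally have l: "Z1 * (Z1 * Z2 - Z2 * Z1) = 0\<^sub>m n n - Z1 * (Z2 * Z1)" .
  have "(Z1 * Z2 - Z2 * Z1) * Z1 = Z1 * Z2 * Z1 - Z2 * Z1 * Z1"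
    using c by (simp add: minus_mult_distrib_mat[of _ n n _ _ n])
  also have "\<dots> = Z1 * (Z2 * Z1) - Z2 * (Z1 * Z1)" using c by (simp add: assoc_n)
  also have "\<dots> = Z1 * (Z2 * Z1)" unfolding ZZ using c by (simp add: minus_zero_matC[of _ n])
  finally have r: "(Z1 * Z2 - Z2 * Z1) * Z1 = Z1 * (Z2 * Z1)" .
  show ?thesis unfolding l r using c by (simp add: zero_minus_matC[of _ n])
qed

lemma main_alg:
  fixes M N T L :: "complex mat"
  assumes c: "M \<in> carrier_mat n n" "N \<in> carrier_mat n n" "T \<in> carrier_mat n n" "L \<in> carrier_mat n n"
  and MM: "M * M = 0\<^sub>m n n" and NN: "N * N = 0\<^sub>m n n" and TMN: "T = M * N - N * M"
  and TLT: "T * L * T = T" and LT: "L * T = 1\<^sub>m n - T * L" and TT: "T * T = 0\<^sub>m n n"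
  shows "\<exists>k::nat. trm (T * L) = 2 * of_nat k"
proof -
  have MT: "M * T = - (T * M)" unfolding TMN by (rule anti_left[OF c(1,2) MM])
  have T': "T = - (N * M - M * N)" unfolding TMN using c by (intro eq_matI) auto
  have NT0: "N * (N * M - M * N) = - ((N * M - M * N) * N)" by (rule anti_left[OF c(2,1) NN])
  have NT: "N * T = - (T * N)" unfolding T' using NT0 c by simp
  have TN: "T * N = - (N * T)" unfolding NT using c by simp
  have TM: "T * M = - (M * T)" unfolding MT using c by simp
  define X where "X = M + N"
  define Y where "Y = M - N"
  have cX: "X \<in> carrier_mat n n" unfolding X_def using c by simp
  have cY: "Y \<in> carrier_mat n n" unfolding Y_def using c by (simp add: minus_carrier_mat)
  note cc = c cX cY
  have XT: "X * T = - (T * X)"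
  proof -
    have "X * T = M * T + N * T" unfolding X_def using c by (simp add: add_mult_distrib_mat[of _ n n _ _ n])
    moreover have "T * X = T * M + T * N" unfolding X_def using c by (simp add: mult_add_distrib_mat[of _ n n _ n])
    ultimately show ?thesis unfolding MT NT using c by (intro eq_matI) auto
  qed
  have YT: "Y * T = - (T * Y)"
  proof -
    have "Y * T = M * T - N * T" unfolding Y_def using c by (simp add: minus_mult_distrib_mat[of _ n n _ _ n])
    moreover have "T * Y = T * M - T * N" unfolding Y_def using c by (simp add: mult_minus_distrib_mat[of _ n n _ n])
    ultimately show ?thesis unfolding MT NT using c by (intro eq_matI) auto
  qed
  have YX: "Y * X = T"
  proof -
    have "Y * X = M * (M + N) - N * (M + N)" unfolding Y_def X_def using c
      by (simp add: minus_mult_distrib_mat[of _ n n _ _ n])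
    also have "\<dots> = (M * M + M * N) - (N * M + N * N)" using c
      by (simp add: mult_add_distrib_mat[of _ n n _ n])
    also have "\<dots> = T" unfolding MM NN TMN using c by (intro eq_matI) auto
    finally show ?thesis .
  qed
  have XY: "X * Y = - T"
  proof -
    have "X * Y = M * (M - N) + N * (M - N)" unfolding Y_def X_def using c
      by (simp add: add_mult_distrib_mat[of _ n n _ _ n] minus_carrier_mat)
    also have "\<dots> = (M * M - M * N) + (N * M - N * N)" using c
      by (simp add: mult_minus_distrib_mat[of _ n n _ n])
    also have "\<dots> = - T" unfolding MM NN TMN using c by (intro eq_matI) auto
    finally show ?thesis .
  qed
  define R where "R = L * (X * L)"
  have cR: "R \<in> carrier_mat n n" unfolding R_def using cc by simp
  define P where "P = Y * (T * R)"
  have cP: "P \<in> carrier_mat n n" unfolding P_def using cc cR by simp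
  define V where "V = L * (Y * R)"
  have cV: "V \<in> carrier_mat n n" unfolding V_def using cc cR by simp
  have PP0: "P * P = Y * (T * (L * (X * (L * P))))"
  proof -
    have "P * P = Y * (T * (R * P))" unfolding P_def using cc cR by (simp add: assoc_n)
    moreover have "R * P = L * (X * (L * P))" unfolding R_def using cc cP by (simp add: assoc_n)
    ultimately show ?thesis by simp
  qed
  have inner: "X * (L * P) = T * R - T * (X * V)"
  proof -
    have "L * P = - (L * (T * (Y * R)))" unfolding P_def
      using push_rule[OF cY c(3) cR YT] cc cR by simp
    also have "\<dots> = - (Y * R - T * V)" unfolding V_def
      using lt_rule[OF c(4,3), of "Y * R", OF _ LT] cc cR by simp
    finally have "X * (L * P) = - (X * (Y * R - T * V))" using cc cR cV by simp
    also have "\<dots> = - (X * (Y * R) - X * (T * V))"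
      using cc cR cV by (simp add: mult_minus_distrib_mat[of _ n n _ n])
    also have "\<dots> = - (- (T * R) - - (T * (X * V)))"
      using prod_rule[OF cX cY cR XY] push_rule[OF cX c(3) cV XT] cc cR cV by simp
    also have "\<dots> = T * R - T * (X * V)"
      using cc cR cV by (intro eq_matI) auto
    finally show ?thesis .
  qed
  have PP: "P * P = P"
  proof -
    have "L * (T * R - T * (X * V)) = L * (T * R) - L * (T * (X * V))"
      using cc cR cV by (simp add: mult_minus_distrib_mat[of _ n n _ n])
    then have "T * (L * (T * R - T * (X * V))) = T * (L * (T * R)) - T * (L * (T * (X * V)))"
      using cc cR cV by (simp add: mult_minus_distrib_mat[of _ n n _ n])
    also have "\<dots> = T * R - T * (X * V)"
      using tlt_rule[OF c(4,3) cR TLT] tlt_rule[OF c(4,3) _ TLT, of "X * V"] cc cR cV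
      by simp
    finally have e: "T * (L * (T * R - T * (X * V))) = T * R - T * (X * V)" .
    have "Y * (T * (X * V)) = - (T * (T * V))"
      using push_rule[OF cY c(3), of "X * V", OF _ YT] prod_rule[OF cY cX cV YX] cc cV by simp
    also have "T * (T * V) = 0\<^sub>m n n" using prod_rule[OF c(3,3) cV TT] cV by simp
    finally have z: "Y * (T * (X * V)) = - 0\<^sub>m n n" .
    have "P * P = Y * (T * R - T * (X * V))" unfolding PP0 inner e ..
    also have "\<dots> = Y * (T * R) - Y * (T * (X * V))"
      using cc cR cV by (simp add: mult_minus_distrib_mat[of _ n n _ n])
    also have "\<dots> = P" unfolding z P_def using cc cR by (intro eq_matI) auto
    finally show ?thesis .
  qed
  obtain k where k: "trm P = of_nat k" using idem_trm_nat[OF cP PP] by blast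
  define a where "a = T * (L * (M * L))"
  define b where "b = T * (L * (N * L))"
  have ca: "a \<in> carrier_mat n n" unfolding a_def using c by simp
  have cb: "b \<in> carrier_mat n n" unfolding b_def using c by simp
  have Pexp: "P = (M * a + M * b) - (N * a + N * b)"
  proof -
    have "T * R = a + b" unfolding R_def X_def a_def b_def using c
      by (simp add: add_mult_distrib_mat[of _ n n _ _ n] mult_add_distrib_mat[of _ n n _ n])
    then have "P = (M - N) * (a + b)" unfolding P_def Y_def by simp
    also have "\<dots> = M * (a + b) - N * (a + b)" using c ca cb
      by (simp add: minus_mult_distrib_mat[of _ n n _ _ n])
    also have "\<dots> = (M * a + M * b) - (N * a + N * b)" using c ca cb
      by (simp add: mult_add_distrib_mat[of _ n n _ n])
    finally show ?thesis .
  qed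
  have tMa: "trm (M * a) = 0" unfolding a_def by (rule nil_block[OF c(1,3,4) MM MT TLT LT])
  have tNb: "trm (N * b) = 0" unfolding b_def by (rule nil_block[OF c(2,3,4) NN NT TLT LT])
  have tP: "trm P = trm (M * b) - trm (N * a)"
    unfolding Pexp using c ca cb tMa tNb
    by (simp add: trm_minus[of _ n] trm_add[of _ n] minus_carrier_mat)
  have TL: "T * L = M * (N * L) - N * (M * L)" unfolding TMN using c
    by (simp add: minus_mult_distrib_mat[of _ n n _ _ n] assoc_n)
  have s1: "trm (M * (N * L)) = trm (M * b) - trm (N * a)"
    unfolding a_def b_def by (rule trm_swap[OF c(1,2,3,4) LT TN])
  have s2: "trm (N * (M * L)) = trm (N * a) - trm (M * b)"
    unfolding a_def b_def by (rule trm_swap[OF c(2,1,3,4) LT TM])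
  have "trm (T * L) = trm (M * (N * L)) - trm (N * (M * L))"
    unfolding TL using c by (simp add: trm_minus[of _ n])
  also have "\<dots> = 2 * trm P" unfolding s1 s2 tP by simp
  finally show ?thesis using k by auto
qed



lemma lt4: "(i::nat) < 4 \<longleftrightarrow> i = 0 \<or> i = 1 \<or> i = 2 \<or> i = 3" by auto
lemma sum4: "(\<Sum>k\<in>{0..<4::nat}. f k) = f 0 + f 1 + f 2 + f 3"
  by (simp add: numeral_eq_Suc atLeast0LessThan lessThan_Suc ac_simps)

definition M4 :: "complex mat" where
  "M4 = mat 4 4 (\<lambda>(i,j). if i = 0 \<and> j = 2 then 1 else if i = 1 \<and> j = 3 then -1 else 0)"
definition N4 :: "complex mat" where
  "N4 = mat 4 4 (\<lambda>(i,j). if i = 2 \<and> j = 1 then 1 else 0)"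
definition J4 :: "complex mat" where
  "J4 = mat 4 4 (\<lambda>(i,j). if (i = 0 \<and> j = 1) \<or> (i = 2 \<and> j = 3) then 1 else 0)"

lemma M4_carrier: "M4 \<in> carrier_mat 4 4" unfolding M4_def by simp
lemma N4_carrier: "N4 \<in> carrier_mat 4 4" unfolding N4_def by simp
lemma J4_carrier: "J4 \<in> carrier_mat 4 4" unfolding J4_def by simp

lemma M4_sq: "M4 * M4 = 0\<^sub>m 4 4"
  unfolding M4_def by (rule eq_matI) (auto simp: scalar_prod_def sum4 lt4)
lemma N4_sq: "N4 * N4 = 0\<^sub>m 4 4"
  unfolding N4_def by (rule eq_matI) (auto simp: scalar_prod_def sum4 lt4)
lemma MN4: "M4 * N4 - N4 * M4 = J4"
  unfolding M4_def N4_def J4_def by (rule eq_matI) (auto simp: scalar_prod_def sum4 lt4)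

lemma J4_blocks: "diag_block_mat [J2, J2] = J4"
  unfolding J4_def J2_alt by (rule eq_matI) (auto simp: Let_def lt4)

lemma J2_pow_even: "J2_pow (2 * k) = diag_block_mat (replicate k J4)"
proof (induct k)
  case 0 then show ?case by (simp add: J2_pow_def)
next
  case (Suc k)
  have r: "replicate (2 * Suc k) J2 = [J2, J2] @ replicate (2 * k) J2" by simp
  have c: "J2_pow (2 * k) \<in> carrier_mat (k*4) (k*4)"
    unfolding Suc using diag_rep_carrier[OF J4_carrier] .
  have "J2_pow (2 * Suc k) = four_block_mat J4 (0\<^sub>m 4 (k*4)) (0\<^sub>m (k*4) 4) (J2_pow (2 * k))"
    unfolding J2_pow_def r diag_block_mat_append Let_def J4_blocks
    using c J4_carrier unfolding J2_pow_def by (simp add: carrier_matD)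
  also have "\<dots> = diag_block_mat (replicate (Suc k) J4)"
    unfolding diag_rep_Suc[OF J4_carrier] Suc ..
  finally show ?case .
qed

lemma T_facts:
  fixes mu :: nat
  defines "T \<equiv> J2_pow mu" and "L \<equiv> diag_block_mat (replicate mu J2t)"
  shows "T \<in> carrier_mat (2*mu) (2*mu)" "L \<in> carrier_mat (2*mu) (2*mu)"
    "T * T = 0\<^sub>m (2*mu) (2*mu)" "T * L * T = T" "L * T = 1\<^sub>m (2*mu) - T * L"
    "trm (T * L) = of_nat mu"
proof -
  have cT: "T \<in> carrier_mat (mu*2) (mu*2)" unfolding T_def J2_pow_def by (rule diag_rep_carrier[OF J2_carrier])
  have cL: "L \<in> carrier_mat (mu*2) (mu*2)" unfolding L_def by (rule diag_rep_carrier[OF J2t_carrier])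
  show "T \<in> carrier_mat (2*mu) (2*mu)" "L \<in> carrier_mat (2*mu) (2*mu)" using cT cL by (simp_all add: mult.commute)
  have TL: "T * L = diag_block_mat (replicate mu (J2 * J2t))"
    unfolding T_def L_def J2_pow_def by (rule diag_rep_mult[OF J2_carrier J2t_carrier])
  show "T * T = 0\<^sub>m (2*mu) (2*mu)"
    unfolding T_def J2_pow_def diag_rep_mult[OF J2_carrier J2_carrier] J2_sq diag_rep_zero
    by (simp add: mult.commute)
  show "T * L * T = T"
    unfolding TL unfolding T_def J2_pow_def
    using diag_rep_mult[where A="J2 * J2t" and m=2 and B=J2 and k=mu] J2_carrier J2t_carrier
    by (simp add: J2_TLT)
  have "L * T = diag_block_mat (replicate mu (J2t * J2))"
    unfolding T_def L_def J2_pow_def by (rule diag_rep_mult[OF J2t_carrier J2_carrier])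
  also have "\<dots> = diag_block_mat (replicate mu (1\<^sub>m 2)) - diag_block_mat (replicate mu (J2 * J2t))"
    unfolding J2_LT using J2_carrier J2t_carrier
    by (intro diag_rep_minus[symmetric]) auto
  also have "\<dots> = 1\<^sub>m (2*mu) - T * L" unfolding TL diag_rep_one by (simp add: mult.commute)
  finally show "L * T = 1\<^sub>m (2*mu) - T * L" .
  show "trm (T * L) = of_nat mu" unfolding TL
    using diag_rep_trm[of "J2 * J2t" 2 mu] J2_carrier J2t_carrier J2_trm by simp
qed

theorem proposition3p06:
  fixes mu :: nat
  shows "(\<exists>M \<in> carrier_mat (2*mu) (2*mu). \<exists>N \<in> carrier_mat (2*mu) (2*mu).
            M * M = 0\<^sub>m (2*mu) (2*mu) \<and> N * N = 0\<^sub>m (2*mu) (2*mu) \<and>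
            J2_pow mu = M * N - N * M)
         \<longleftrightarrow> even mu"
proof
  assume "\<exists>M \<in> carrier_mat (2*mu) (2*mu). \<exists>N \<in> carrier_mat (2*mu) (2*mu).
            M * M = 0\<^sub>m (2*mu) (2*mu) \<and> N * N = 0\<^sub>m (2*mu) (2*mu) \<and>
            J2_pow mu = M * N - N * M"
  then obtain M N where M: "M \<in> carrier_mat (2*mu) (2*mu)" and N: "N \<in> carrier_mat (2*mu) (2*mu)"
    and MM: "M * M = 0\<^sub>m (2*mu) (2*mu)" and NN: "N * N = 0\<^sub>m (2*mu) (2*mu)"
    and TMN: "J2_pow mu = M * N - N * M" by blast
  note F = T_facts[of mu]
  obtain k where k: "trm (J2_pow mu * diag_block_mat (replicate mu J2t)) = 2 * of_nat k"
    using main_alg[OF M N F(1) F(2) MM NN TMN F(4) F(5) F(3)] by blast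
  then have "(of_nat mu :: complex) = of_nat (2 * k)" using F(6) by simp
  then have "mu = 2 * k" using of_nat_eq_iff by blast
  then show "even mu" by simp
next
  assume "even mu"
  then obtain k where k: "mu = 2 * k" by blast
  have e: "2 * mu = k * 4" using k by simp
  define M where "M = diag_block_mat (replicate k M4)"
  define N where "N = diag_block_mat (replicate k N4)"
  have cM: "M \<in> carrier_mat (2*mu) (2*mu)" unfolding M_def e by (rule diag_rep_carrier[OF M4_carrier])
  have cN: "N \<in> carrier_mat (2*mu) (2*mu)" unfolding N_def e by (rule diag_rep_carrier[OF N4_carrier])
  have MM: "M * M = 0\<^sub>m (2*mu) (2*mu)"
    unfolding M_def e diag_rep_mult[OF M4_carrier M4_carrier] M4_sq diag_rep_zero ..
  have NN: "N * N = 0\<^sub>m (2*mu) (2*mu)"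
    unfolding N_def e diag_rep_mult[OF N4_carrier N4_carrier] N4_sq diag_rep_zero ..
  have TMN: "J2_pow mu = M * N - N * M"
    unfolding M_def N_def diag_rep_mult[OF M4_carrier N4_carrier] diag_rep_mult[OF N4_carrier M4_carrier]
    using diag_rep_minus[of "M4 * N4" 4 "N4 * M4" k] M4_carrier N4_carrier
    by (simp add: MN4 k J2_pow_even)
  show "\<exists>M \<in> carrier_mat (2*mu) (2*mu). \<exists>N \<in> carrier_mat (2*mu) (2*mu).
            M * M = 0\<^sub>m (2*mu) (2*mu) \<and> N * N = 0\<^sub>m (2*mu) (2*mu) \<and>
            J2_pow mu = M * N - N * M"
    using cM cN MM NN TMN by blast
qed


end
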